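(* Let $t_1, t_2 \in \mathsf{Topo}$ and let $f: \mathsf{Addr}(t_1) \to \mathsf{Addr}(t_2)$ be an embedding. Then (1) if $t_1 = *$, then $t_2 = *$; and (2) if $t_1 = \mathsf{Node}(\vec t_1)$, then for each $1 \le i \le |\vec t_1|$ there exists an embedding $f_i$ of $t_1/i$ inside $t_2/f(i)$ satisfying $f(i\cdot\alpha) = f(i)\cdot f_i(\alpha)$ for all $\alpha \in \mathsf{Addr}(t_1/i)$.
   Context: Topologies: $\mathsf{Topo}$ is the smallest set with $*\in\mathsf{Topo}$ and $\mathsf{Node}(\vec t)\in\mathsf{Topo}$ for every $n\in\mathbb{N}$ and list $\vec t\in\mathsf{Topo}^n$ (entries $\vec t[i]$). Addresses: $\mathsf{Addr}(t)\subseteq\mathbb{N}^*$ is the smallest set with $\epsilon\in\mathsf{Addr}(t)$ and $i\cdot\alpha\in\mathsf{Addr}(\mathsf{Node}(\vec t))$ for $1\le i\le n$, $\alpha\in\mathsf{Addr}(\vec t[i])$. Subtrees: $t/\epsilon=t$, $\mathsf{Node}(\vec t)/(i\cdot\alpha)=\vec t[i]/\alpha$. An embedding of $t_1$ in $t_2$ is an injective $f:\mathsf{Addr}(t_1)\to\mathsf{Addr}(t_2)$ with $f(\epsilon)=\epsilon$; $t_2/f(\alpha)=*$ whenever $t_1/\alpha=*$; and for all $\alpha,\alpha'$, $\alpha$ is a prefix of $\alpha'$ iff $f(\alpha)$ is a prefix of $f(\alpha')$. *)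

theory Defs
  imports Main "HOL-Library.Sublist"
begin

datatype topo = Star | Node "topo list"

type_synonym addr = "nat list"

text \<open>Addresses, with children indexed from 1 as in the paper.\<close>
inductive_set Addr' :: "(topo \<times> addr) set" where
  A_nil: "(t, []) \<in> Addr'"
| A_cons: "1 \<le> i \<Longrightarrow> i \<le> length ts \<Longrightarrow> (ts ! (i - 1), \<alpha>) \<in> Addr'
            \<Longrightarrow> (Node ts, i # \<alpha>) \<in> Addr'"

definition addrs :: "topo \<Rightarrow> addr set" where
  "addrs t = {\<alpha>. (t, \<alpha>) \<in> Addr'}"

text \<open>Subtree t/alpha; only meaningful for alpha in addrs t.\<close>
fun subtree :: "topo \<Rightarrow> addr \<Rightarrow> topo" where
  "subtree t [] = t"
| "subtree (Node ts) (i # \<alpha>) = subtree (ts ! (i - 1)) \<alpha>"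
| "subtree Star (i # \<alpha>) = undefined"

definition embedding :: "topo \<Rightarrow> topo \<Rightarrow> (addr \<Rightarrow> addr) \<Rightarrow> bool" where
  "embedding t1 t2 f \<longleftrightarrow>
     f ` addrs t1 \<subseteq> addrs t2 \<and>
     inj_on f (addrs t1) \<and>
     f [] = [] \<and>
     (\<forall>\<alpha>\<in>addrs t1. subtree t1 \<alpha> = Star \<longrightarrow> subtree t2 (f \<alpha>) = Star) \<and>
     (\<forall>\<alpha>\<in>addrs t1. \<forall>\<alpha>'\<in>addrs t1. prefix \<alpha> \<alpha>' \<longleftrightarrow> prefix (f \<alpha>) (f \<alpha>'))"

end

theory Submission
  imports Defs
begin

lemma addrs_nil[simp]: "[] \<in> addrs t"
  by (simp add: addrs_def Addr'.A_nil)

lemma addrs_cons: "(i # \<alpha> \<in> addrs t) \<longleftrightarrow>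
   (\<exists>ts. t = Node ts \<and> 1 \<le> i \<and> i \<le> length ts \<and> \<alpha> \<in> addrs (ts ! (i - 1)))"
  unfolding addrs_def
  by (auto elim: Addr'.cases intro: Addr'.A_cons)

lemma addrs_Star: "addrs Star = {[]}"
proof -
  have "\<alpha> \<in> addrs Star \<Longrightarrow> \<alpha> = []" for \<alpha> by (cases \<alpha>) (auto simp: addrs_cons)
  then show ?thesis by auto
qed

lemma addrs_app: "\<beta> \<in> addrs t \<Longrightarrow>
   (\<beta> @ \<gamma> \<in> addrs t \<longleftrightarrow> \<gamma> \<in> addrs (subtree t \<beta>)) \<and>
   subtree t (\<beta> @ \<gamma>) = subtree (subtree t \<beta>) \<gamma>"
proof (induction \<beta> arbitrary: t)
  case Nil then show ?case by simp
next
  case (Cons i \<beta>)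
  then obtain ts where t: "t = Node ts" "1 \<le> i" "i \<le> length ts" "\<beta> \<in> addrs (ts ! (i - 1))"
    by (auto simp: addrs_cons)
  show ?case using Cons.IH[OF t(4)] t by (auto simp: addrs_cons)
qed

theorem lemma5p3:
  fixes t1 t2 :: topo and f :: "addr \<Rightarrow> addr"
  assumes "embedding t1 t2 f"
  shows "(t1 = Star \<longrightarrow> t2 = Star) \<and>
         (\<forall>ts. t1 = Node ts \<longrightarrow>
            (\<forall>i. 1 \<le> i \<and> i \<le> length ts \<longrightarrow>
               (\<exists>fi. embedding (subtree t1 [i]) (subtree t2 (f [i])) fi \<and>
                     (\<forall>\<alpha>\<in>addrs (subtree t1 [i]). f (i # \<alpha>) = f [i] @ fi \<alpha>))))"
proof -
  note E = assms[unfolded embedding_def]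
  have P1: "t1 = Star \<longrightarrow> t2 = Star"
  proof
    assume "t1 = Star"
    have "\<forall>\<alpha>\<in>addrs t1. subtree t1 \<alpha> = Star \<longrightarrow> subtree t2 (f \<alpha>) = Star" using E by blast
    then have "subtree t2 (f []) = Star" using \<open>t1 = Star\<close> addrs_nil[of Star] by simp
    then show "t2 = Star" using E by simp
  qed
  have P2: "\<exists>fi. embedding (subtree t1 [i]) (subtree t2 (f [i])) fi \<and>
                     (\<forall>\<alpha>\<in>addrs (subtree t1 [i]). f (i # \<alpha>) = f [i] @ fi \<alpha>)"
    if t1: "t1 = Node ts" and i: "1 \<le> i" "i \<le> length ts" for ts i
  proof -
    define s where "s = ts ! (i - 1)"
    have sub: "subtree t1 [i] = s" using t1 s_def by simp
    have mem: "\<alpha> \<in> addrs s \<Longrightarrow> i # \<alpha> \<in> addrs t1" for \<alpha>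
      using t1 i s_def by (auto simp: addrs_cons)
    have i1: "[i] \<in> addrs t1" using mem[of "[]"] by simp
    have fi1: "f [i] \<in> addrs t2" using E i1 by auto
    define fi where "fi = (\<lambda>\<alpha>. drop (length (f [i])) (f (i # \<alpha>)))"
    have dec: "f (i # \<alpha>) = f [i] @ fi \<alpha>" if "\<alpha> \<in> addrs s" for \<alpha>
    proof -
      have "prefix [i] (i # \<alpha>)" by simp
      then have "prefix (f [i]) (f (i # \<alpha>))" using E i1 mem[OF that] by blast
      then show ?thesis unfolding fi_def by (metis append_eq_conv_conj prefix_def)
    qed
    have emb: "embedding s (subtree t2 (f [i])) fi"
      unfolding embedding_def
    proof (intro conjI ballI)
      show "fi ` addrs s \<subseteq> addrs (subtree t2 (f [i]))"
      proof
        fix y assume "y \<in> fi ` addrs s"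
        then obtain \<alpha> where a: "\<alpha> \<in> addrs s" "y = fi \<alpha>" by auto
        have "f [i] @ fi \<alpha> \<in> addrs t2" using dec[OF a(1)] E mem[OF a(1)] by auto
        then show "y \<in> addrs (subtree t2 (f [i]))" using addrs_app[OF fi1] a by auto
      qed
      show "inj_on fi (addrs s)"
      proof
        fix a b assume ab: "a \<in> addrs s" "b \<in> addrs s" "fi a = fi b"
        then have "f (i # a) = f (i # b)" using dec[OF ab(1)] dec[OF ab(2)] by simp
        moreover have "inj_on f (addrs t1)" using E by blast
        ultimately have "i # a = i # b" using mem[OF ab(1)] mem[OF ab(2)] by (simp add: inj_on_eq_iff)
        then show "a = b" by simp
      qed
      show "fi [] = []" unfolding fi_def by simp
      show "subtree s \<alpha> = Star \<longrightarrow> subtree (subtree t2 (f [i])) (fi \<alpha>) = Star"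
        if a: "\<alpha> \<in> addrs s" for \<alpha>
      proof
        assume "subtree s \<alpha> = Star"
        then have "subtree t1 (i # \<alpha>) = Star" using t1 s_def by simp
        then have "subtree t2 (f (i # \<alpha>)) = Star" using E mem[OF a] by auto
        then show "subtree (subtree t2 (f [i])) (fi \<alpha>) = Star"
          using dec[OF a] addrs_app[OF fi1] by simp
      qed
      show "prefix a b \<longleftrightarrow> prefix (fi a) (fi b)" if "a \<in> addrs s" "b \<in> addrs s" for a b
      proof -
        have "prefix a b \<longleftrightarrow> prefix (i # a) (i # b)" by simp
        also have "\<dots> \<longleftrightarrow> prefix (f (i # a)) (f (i # b))"
        proof -
          have "\<forall>\<alpha>\<in>addrs t1. \<forall>\<alpha>'\<in>addrs t1. prefix \<alpha> \<alpha>' \<longleftrightarrow> prefix (f \<alpha>) (f \<alpha>')" using E by blast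
          then show ?thesis using mem[OF that(1)] mem[OF that(2)] by blast
        qed
        also have "\<dots> \<longleftrightarrow> prefix (fi a) (fi b)" using dec[OF that(1)] dec[OF that(2)] by simp
        finally show ?thesis .
      qed
    qed
    have "embedding (subtree t1 [i]) (subtree t2 (f [i])) fi \<and>
          (\<forall>\<alpha>\<in>addrs (subtree t1 [i]). f (i # \<alpha>) = f [i] @ fi \<alpha>)"
      unfolding sub using emb dec by blast
    then show ?thesis by (rule exI[where x=fi])
  qed
  show ?thesis
    apply (rule conjI[OF P1])
    apply (intro allI impI)
    apply (rule P2)
    apply auto
    done
qed

end
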